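(* Let $E$ be a real Hilbert space with $\dim(E)\ge2$, $h\in E$ a unit vector, $H^+=\{x\in E\mid (h,x)>0\}$, and define $\preceq$ on $H^+$ by $x\preceq y\iff\|x-y_\perp\|\le y_h$. If $x,y\in H^+$ satisfy $x\preceq y$ and $x\ne y$, then $\ln(x_h)<\ln(y_h)$.
   Context: For $x\in E$, $x_h=(h,x)$ and $x_\perp=x-(h,x)h$. *)

theory Defs
  imports "HOL-Analysis.Analysis"
begin

text \<open>Real Hilbert space: type class real_inner together with complete_space.
  For a unit vector h: x_h = (h,x) and x_perp = x - (h,x) h.\<close>

definition hcomp :: "'a::real_inner \<Rightarrow> 'a \<Rightarrow> real" where
  "hcomp h x = inner h x"

definition hperp :: "'a::real_inner \<Rightarrow> 'a \<Rightarrow> 'a" where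
  "hperp h x = x - (inner h x) *\<^sub>R h"

definition Hplus :: "'a::real_inner \<Rightarrow> 'a set" where
  "Hplus h = {x. inner h x > 0}"

definition hpreceq :: "'a::real_inner \<Rightarrow> 'a \<Rightarrow> 'a \<Rightarrow> bool" where
  "hpreceq h x y \<longleftrightarrow> x \<in> Hplus h \<and> y \<in> Hplus h \<and> norm (x - hperp h y) \<le> hcomp h y"

end

theory Submission
  imports Defs
begin

theorem mainTheorem19:
  fixes h x y :: "'a::{real_inner, complete_space}"
  assumes dim2: "\<exists>u v :: 'a. independent {u, v} \<and> u \<noteq> v"
    and unit: "norm h = 1"
    and xH: "x \<in> Hplus h" and yH: "y \<in> Hplus h"
    and le: "hpreceq h x y" and ne: "x \<noteq> y"
  shows "ln (hcomp h x) < ln (hcomp h y)"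
proof -
  define a where "a = inner h x"
  define b where "b = inner h y"
  have a0: "a > 0" using xH by (simp add: Hplus_def a_def)
  have b0: "b > 0" using yH by (simp add: Hplus_def b_def)
  have hh: "inner h h = 1" using unit by (simp add: norm_eq_sqrt_inner)
  define w where "w = x - y - (a - b) *\<^sub>R h"
  have wh: "inner w h = 0"
    using hh by (simp add: w_def a_def b_def inner_diff_right inner_commute)
  have d: "x - hperp h y = w + a *\<^sub>R h"
    by (simp add: w_def hperp_def b_def algebra_simps)
  have nd: "norm (x - hperp h y) \<le> b" using le by (simp add: hpreceq_def hcomp_def b_def)
  have "(norm (x - hperp h y))^2 = inner w w + a^2"
    unfolding d power2_norm_eq_inner
    using wh hh by (simp add: inner_add_left inner_add_right inner_commute power2_eq_square)
  hence eq: "inner w w + a^2 \<le> b^2" using nd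
    by (metis norm_ge_zero power_mono)
  have ww: "inner w w \<ge> 0" by simp
  have "a^2 \<le> b^2" using eq ww by linarith
  hence ab: "a \<le> b" using a0 b0 by (simp add: power_mono_iff)
  have "a \<noteq> b"
  proof
    assume "a = b"
    hence "inner w w = 0" using eq ww by simp
    hence "w = 0" by simp
    hence "x = y" using \<open>a = b\<close> by (simp add: w_def)
    thus False using ne by simp
  qed
  hence "a < b" using ab by simp
  thus ?thesis using a0 by (simp add: hcomp_def a_def b_def)
qed

end
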